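(* Let $N,\alpha\in\mathbb{N}$ and let $a_1,\dots,a_\alpha$ be complex numbers. Define $a_{n,j}:=a_j$ if $n\le N$ and $j\le\alpha$, and $a_{n,j}:=0$ otherwise ($n,j\ge1$). Then $$(1+a_1+\cdots+a_\alpha)^N=1+\sum_{k=1}^{\alpha N}\ \sum_{L\vdash k}\frac{1}{C_{stb}(L)}\sum_{\sigma\in S_{\ell(L)}}\operatorname{sign}(\sigma)\,\mathbb{A}_{\sigma,L}\big(\{a_{n,j}\}_{n,j\ge1}\big).$$
   Context: $L\vdash k$ means $L=[x_1,\dots,x_m]$ is a partition of $k$ (multiset of positive integers summing to $k$), $\ell(L)=m$, and $C_{stb}(L):=\prod_x(\#\{i:x_i=x\})!$ over distinct values $x$ in $L$. Writing $L=[k_1,\dots,k_m]$ with $k_1\le\cdots\le k_m$ and, for $\sigma\in S_m$ (sign denoted $\operatorname{sign}$), decomposing $\sigma$ into disjoint cycles $C_1,\dots,C_r$ (fixed points kept as length-one cycles), $\mathbb{A}_{\sigma,L}(\{a_{n,j}\}):=\prod_{t=1}^{r}\big(\sum_{n=1}^{\infty}\prod_{i\in C_t}a_{n,k_i}\big)$ (finite sums here). *)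

theory Defs
  imports Complex_Main "HOL-Library.Multiset" "HOL-Combinatorics.Combinatorics"
begin

definition partitions_of :: "nat \<Rightarrow> nat multiset set" where
  "partitions_of k = {L. (\<forall>x\<in>#L. 0 < x) \<and> sum_mset L = k}"

definition part_len :: "nat multiset \<Rightarrow> nat" where
  "part_len L = size L"

definition C_stb :: "nat multiset \<Rightarrow> nat" where
  "C_stb L = (\<Prod>x\<in>set_mset L. fact (count L x))"

text \<open>Cycles of a permutation sigma of {0..<m} (fixed points give singleton cycles);
  index i (0-based) corresponds to k_{i+1} of the sorted list.\<close>
definition perm_cycles :: "nat \<Rightarrow> (nat \<Rightarrow> nat) \<Rightarrow> nat set set" where
  "perm_cycles m \<sigma> = (\<lambda>i. orbit \<sigma> i) ` {..<m}"

definition bbA :: "(nat \<Rightarrow> nat) \<Rightarrow> nat multiset \<Rightarrow> (nat \<Rightarrow> nat \<Rightarrow> complex) \<Rightarrow> complex" where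
  "bbA \<sigma> L a = (let ks = sorted_list_of_multiset L in
     \<Prod>C\<in>perm_cycles (size L) \<sigma>. (\<Sum>n. \<Prod>i\<in>C. a (Suc n) (ks ! i)))"

end

theory Submission
  imports Defs
begin


lemma perm_of:
  fixes m :: nat
  assumes "\<sigma> permutes {..<m}" shows "permutation \<sigma>"
  unfolding permutation_permutes using assms by (intro exI[of _ "{..<m}"]) simp

lemma orbit_same:
  fixes m :: nat
  assumes "\<sigma> permutes {..<m}" "j \<in> orbit \<sigma> i"
  shows "orbit \<sigma> j = orbit \<sigma> i"
proof -
  have "cyclic_on \<sigma> (orbit \<sigma> i)" by (rule cyclic_on_orbit'[OF perm_of[OF assms(1)]])
  then show ?thesis by (rule orbit_cyclic_eq3[OF _ assms(2)])
qed

lemma self_orbit: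
  fixes m :: nat
  assumes "\<sigma> permutes {..<m}" shows "i \<in> orbit \<sigma> i"
  by (rule permutation_self_in_orbit[OF perm_of[OF assms]])

lemma orbit_sub:
  fixes m :: nat
  assumes "\<sigma> permutes {..<m}" "i < m" shows "orbit \<sigma> i \<subseteq> {..<m}"
  by (rule permutes_orbit_subset[OF assms(1)]) (use assms(2) in simp)

lemma orbit_fin:
  fixes m :: nat
  assumes "\<sigma> permutes {..<m}" shows "finite (orbit \<sigma> i)"
  by (rule finite_orbit[OF self_orbit[OF assms]])

lemma const_on_orbit:
  fixes m :: nat
  assumes "\<sigma> permutes {..<m}" "i < m" "\<forall>k<m. f (\<sigma> k) = f k" "j \<in> orbit \<sigma> i"
  shows "f j = f i"
  using assms(4)
proof induction
  case base then show ?case using assms(3) assms(2) by simp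
next
  case (step y)
  then have "y < m" using orbit_sub[OF assms(1,2)] by blast
  then show ?case using step assms(3) by simp
qed

lemma cycles_prod:
  fixes m :: nat
  fixes x :: "nat \<Rightarrow> nat \<Rightarrow> complex"
  assumes "\<sigma> permutes {..<m}" "finite A"
  shows "(\<Prod>C\<in>perm_cycles m \<sigma>. \<Sum>n\<in>A. \<Prod>i\<in>C. x n i)
       = (\<Sum>f\<in>{f\<in>{..<m} \<rightarrow>\<^sub>E A. \<forall>k<m. f (\<sigma> k) = f k}. \<Prod>i<m. x (f i) i)"
proof -
  let ?cyc = "perm_cycles m \<sigma>"
  have fc: "finite ?cyc" unfolding perm_cycles_def by simp
  have "(\<Prod>C\<in>?cyc. \<Sum>n\<in>A. \<Prod>i\<in>C. x n i) = (\<Sum>h\<in>?cyc \<rightarrow>\<^sub>E A. \<Prod>C\<in>?cyc. \<Prod>i\<in>C. x (h C) i)"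
    using prod_sum_PiE[OF fc, of "\<lambda>_. A" "\<lambda>C n. \<Prod>i\<in>C. x n i"] assms(2) by simp
  also have "\<dots> = (\<Sum>h\<in>?cyc \<rightarrow>\<^sub>E A. \<Prod>i<m. x (restrict (\<lambda>i. h (orbit \<sigma> i)) {..<m} i) i)"
  proof (rule sum.cong[OF refl])
    fix h assume h: "h \<in> ?cyc \<rightarrow>\<^sub>E A"
    have U: "\<Union> ?cyc = {..<m}"
    proof (intro equalityI subsetI)
      fix y assume "y \<in> \<Union> ?cyc"
      then obtain i where i: "i < m" "y \<in> orbit \<sigma> i" unfolding perm_cycles_def by auto
      show "y \<in> {..<m}" using orbit_sub[OF assms(1) i(1)] i(2) by (rule subsetD)
    next
      fix y assume y: "y \<in> {..<m}"
      have "orbit \<sigma> y \<in> ?cyc" using y unfolding perm_cycles_def by (rule imageI)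
      moreover have "y \<in> orbit \<sigma> y" by (rule self_orbit[OF assms(1)])
      ultimately show "y \<in> \<Union> ?cyc" by (rule UnionI)
    qed
    have D: "\<forall>C1\<in>?cyc. \<forall>C2\<in>?cyc. C1 \<noteq> C2 \<longrightarrow> C1 \<inter> C2 = {}"
    proof (intro ballI impI)
      fix C1 C2 assume c1: "C1 \<in> ?cyc" and c2: "C2 \<in> ?cyc" and ne: "C1 \<noteq> C2"
      obtain i1 where i1: "C1 = orbit \<sigma> i1" using c1 unfolding perm_cycles_def by auto
      obtain i2 where i2: "C2 = orbit \<sigma> i2" using c2 unfolding perm_cycles_def by auto
      show "C1 \<inter> C2 = {}"
      proof (rule ccontr)
        assume "C1 \<inter> C2 \<noteq> {}"
        then obtain y where y1: "y \<in> orbit \<sigma> i1" and y2: "y \<in> orbit \<sigma> i2" using i1 i2 by auto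
        have "orbit \<sigma> y = orbit \<sigma> i1" by (rule orbit_same[OF assms(1) y1])
        moreover have "orbit \<sigma> y = orbit \<sigma> i2" by (rule orbit_same[OF assms(1) y2])
        ultimately have "orbit \<sigma> i1 = orbit \<sigma> i2" by simp
        then show False using ne i1 i2 by simp
      qed
    qed
    have FC: "\<forall>C\<in>?cyc. finite C"
    proof
      fix C assume "C \<in> ?cyc"
      then obtain i where "C = orbit \<sigma> i" unfolding perm_cycles_def by auto
      then show "finite C" using orbit_fin[OF assms(1)] by simp
    qed
    have "(\<Prod>i<m. x (restrict (\<lambda>i. h (orbit \<sigma> i)) {..<m} i) i) = (\<Prod>i\<in>\<Union> ?cyc. x (h (orbit \<sigma> i)) i)"
      using U by simp
    also have "\<dots> = (\<Prod>C\<in>?cyc. \<Prod>i\<in>C. x (h (orbit \<sigma> i)) i)"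
      using prod.Union_disjoint[OF FC D, of "\<lambda>i. x (h (orbit \<sigma> i)) i"] by simp
    also have "\<dots> = (\<Prod>C\<in>?cyc. \<Prod>i\<in>C. x (h C) i)"
    proof (rule prod.cong[OF refl], rule prod.cong[OF refl])
      fix C i assume C: "C \<in> ?cyc" and i: "i \<in> C"
      obtain j where j: "C = orbit \<sigma> j" using C unfolding perm_cycles_def by auto
      have "orbit \<sigma> i = C" using orbit_same[OF assms(1)] i j by simp
      then show "x (h (orbit \<sigma> i)) i = x (h C) i" by simp
    qed
    finally show "(\<Prod>C\<in>?cyc. \<Prod>i\<in>C. x (h C) i) = (\<Prod>i<m. x (restrict (\<lambda>i. h (orbit \<sigma> i)) {..<m} i) i)" by simp
  qed
  also have "\<dots> = (\<Sum>f\<in>{f\<in>{..<m} \<rightarrow>\<^sub>E A. \<forall>k<m. f (\<sigma> k) = f k}. \<Prod>i<m. x (f i) i)"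
  proof (rule sum.reindex_bij_betw)
    show "bij_betw (\<lambda>h. restrict (\<lambda>i. h (orbit \<sigma> i)) {..<m}) (?cyc \<rightarrow>\<^sub>E A) {f\<in>{..<m} \<rightarrow>\<^sub>E A. \<forall>k<m. f (\<sigma> k) = f k}"
      unfolding bij_betw_def
    proof (intro conjI)
      show "inj_on (\<lambda>h. restrict (\<lambda>i. h (orbit \<sigma> i)) {..<m}) (?cyc \<rightarrow>\<^sub>E A)"
      proof (rule inj_onI)
        fix h1 h2 assume h1: "h1 \<in> ?cyc \<rightarrow>\<^sub>E A" and h2: "h2 \<in> ?cyc \<rightarrow>\<^sub>E A"
          and eq: "restrict (\<lambda>i. h1 (orbit \<sigma> i)) {..<m} = restrict (\<lambda>i. h2 (orbit \<sigma> i)) {..<m}"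
        show "h1 = h2"
        proof (rule PiE_ext[OF h1 h2])
          fix C assume "C \<in> ?cyc"
          then obtain i where i: "i < m" "C = orbit \<sigma> i" unfolding perm_cycles_def by auto
          have "restrict (\<lambda>i. h1 (orbit \<sigma> i)) {..<m} i = restrict (\<lambda>i. h2 (orbit \<sigma> i)) {..<m} i"
            using eq by simp
          then show "h1 C = h2 C" using i by simp
        qed
      qed
      show "(\<lambda>h. restrict (\<lambda>i. h (orbit \<sigma> i)) {..<m}) ` (?cyc \<rightarrow>\<^sub>E A) = {f\<in>{..<m} \<rightarrow>\<^sub>E A. \<forall>k<m. f (\<sigma> k) = f k}"
      proof (intro equalityI subsetI)
        fix f assume "f \<in> (\<lambda>h. restrict (\<lambda>i. h (orbit \<sigma> i)) {..<m}) ` (?cyc \<rightarrow>\<^sub>E A)"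
        then obtain h where h: "h \<in> ?cyc \<rightarrow>\<^sub>E A" and f: "f = restrict (\<lambda>i. h (orbit \<sigma> i)) {..<m}" by auto
        have "\<forall>k<m. f (\<sigma> k) = f k"
        proof (intro allI impI)
          fix k assume k: "k < m"
          have "\<sigma> k < m" using permutes_in_image[OF assms(1)] k by simp
          moreover have "orbit \<sigma> (\<sigma> k) = orbit \<sigma> k"
            by (rule orbit_same[OF assms(1) orbit.base])
          ultimately show "f (\<sigma> k) = f k" using f k by simp
        qed
        moreover have "f \<in> {..<m} \<rightarrow>\<^sub>E A"
        proof -
          have "\<forall>i\<in>{..<m}. h (orbit \<sigma> i) \<in> A"
          proof
            fix i assume "i \<in> {..<m}"
            then have "orbit \<sigma> i \<in> ?cyc" unfolding perm_cycles_def by (rule imageI)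
            then show "h (orbit \<sigma> i) \<in> A" by (rule PiE_mem[OF h])
          qed
          then show ?thesis unfolding f by simp
        qed
        ultimately show "f \<in> {f\<in>{..<m} \<rightarrow>\<^sub>E A. \<forall>k<m. f (\<sigma> k) = f k}" by simp
      next
        fix f assume f: "f \<in> {f\<in>{..<m} \<rightarrow>\<^sub>E A. \<forall>k<m. f (\<sigma> k) = f k}"
        define h where "h = restrict (\<lambda>C. f (SOME i. i \<in> C)) ?cyc"
        have "h \<in> ?cyc \<rightarrow>\<^sub>E A"
        proof -
          { fix C assume "C \<in> ?cyc"
            then obtain i where i: "i < m" "C = orbit \<sigma> i" unfolding perm_cycles_def by auto
            have "(SOME j. j \<in> C) \<in> C" using i self_orbit[OF assms(1)] by (metis someI)
            then have "(SOME j. j \<in> C) < m" using orbit_sub[OF assms(1) i(1)] i by blast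
            then have "f (SOME j. j \<in> C) \<in> A" using f by auto }
          then show ?thesis unfolding h_def by simp
        qed
        moreover have "f = restrict (\<lambda>i. h (orbit \<sigma> i)) {..<m}"
        proof (rule ext)
          fix i show "f i = restrict (\<lambda>i. h (orbit \<sigma> i)) {..<m} i"
          proof (cases "i < m")
            case True
            have "(SOME j. j \<in> orbit \<sigma> i) \<in> orbit \<sigma> i" using self_orbit[OF assms(1)] by (metis someI)
            moreover have "\<forall>k<m. f (\<sigma> k) = f k" using f by simp
            ultimately have "f (SOME j. j \<in> orbit \<sigma> i) = f i" using const_on_orbit[OF assms(1) True] by blast
            moreover have "orbit \<sigma> i \<in> ?cyc" using True unfolding perm_cycles_def by simp
            ultimately show ?thesis using True by (simp add: h_def)
          next
            case False then show ?thesis using f by (auto simp: PiE_def extensional_def)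
          qed
        qed
        ultimately show "f \<in> (\<lambda>h. restrict (\<lambda>i. h (orbit \<sigma> i)) {..<m}) ` (?cyc \<rightarrow>\<^sub>E A)" unfolding image_iff by blast
      qed
    qed
  qed
  finally show ?thesis .
qed


lemma sign_sum:
  fixes m :: nat
  assumes "\<not> inj_on f {..<m}"
  shows "(\<Sum>\<sigma>\<in>{\<sigma>. \<sigma> permutes {..<m} \<and> (\<forall>k<m. f (\<sigma> k) = f k)}. (of_int (sign \<sigma>)::complex)) = 0"
proof -
  let ?T = "{\<sigma>. \<sigma> permutes {..<m} \<and> (\<forall>k<m. f (\<sigma> k) = f k)}"
  obtain i j where ij: "i < m" "j < m" "i \<noteq> j" "f i = f j" using assms unfolding inj_on_def by auto
  let ?t = "transpose i j"
  have tp: "?t permutes {..<m}" using ij by (intro permutes_swap_id) auto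
  have ft: "f (?t k) = f k" for k using ij by (auto simp: transpose_def)
  have fin: "finite ?T" by (rule finite_subset[of _ "{\<sigma>. \<sigma> permutes {..<m}}"]) (auto simp: finite_permutations)
  have bij: "bij_betw (\<lambda>\<sigma>. ?t \<circ> \<sigma>) ?T ?T"
  proof (rule bij_betw_byWitness[where f' = "\<lambda>\<sigma>. ?t \<circ> \<sigma>"])
    show "\<forall>a\<in>?T. ?t \<circ> (?t \<circ> a) = a" by (simp add: fun_eq_iff)
    show "\<forall>a\<in>?T. ?t \<circ> (?t \<circ> a) = a" by (simp add: fun_eq_iff)
    show "(\<lambda>\<sigma>. ?t \<circ> \<sigma>) ` ?T \<subseteq> ?T" using tp ft by (auto intro: permutes_compose)
    show "(\<lambda>\<sigma>. ?t \<circ> \<sigma>) ` ?T \<subseteq> ?T" using tp ft by (auto intro: permutes_compose)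
  qed
  have "(\<Sum>\<sigma>\<in>?T. (of_int (sign \<sigma>)::complex)) = (\<Sum>\<sigma>\<in>?T. of_int (sign (?t \<circ> \<sigma>)))"
    using sum.reindex_bij_betw[OF bij, of "\<lambda>\<sigma>. (of_int (sign \<sigma>)::complex)"] by simp
  also have "\<dots> = (\<Sum>\<sigma>\<in>?T. - of_int (sign \<sigma>))"
  proof (rule sum.cong[OF refl])
    fix \<sigma> assume "\<sigma> \<in> ?T"
    then have "permutation \<sigma>" using permutation_permutes by blast
    moreover have "permutation ?t" using tp permutation_permutes by blast
    ultimately show "(of_int (sign (?t \<circ> \<sigma>))::complex) = - of_int (sign \<sigma>)"
      using ij by (simp add: sign_compose sign_swap_id)
  qed
  also have "\<dots> = - (\<Sum>\<sigma>\<in>?T. (of_int (sign \<sigma>)::complex))" by (simp add: sum_negf)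
  finally show ?thesis by simp
qed

lemma sign_sum_inj:
  fixes m :: nat
  assumes "inj_on f {..<m}"
  shows "(\<Sum>\<sigma>\<in>{\<sigma>. \<sigma> permutes {..<m} \<and> (\<forall>k<m. f (\<sigma> k) = f k)}. (of_int (sign \<sigma>)::complex)) = 1"
proof -
  have "{\<sigma>. \<sigma> permutes {..<m} \<and> (\<forall>k<m. f (\<sigma> k) = f k)} = {id}"
  proof (intro equalityI subsetI)
    fix \<sigma> assume s: "\<sigma> \<in> {\<sigma>. \<sigma> permutes {..<m} \<and> (\<forall>k<m. f (\<sigma> k) = f k)}"
    have "\<sigma> k = k" for k
    proof (cases "k < m")
      case True
      then have "\<sigma> k < m" using s permutes_in_image by fastforce
      then show ?thesis using True s assms unfolding inj_on_def by auto
    next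
      case False then show ?thesis using s permutes_not_in by fastforce
    qed
    then show "\<sigma> \<in> {id}" by auto
  qed (auto simp: permutes_id)
  then show ?thesis by simp
qed

lemma sign_cycles:
  fixes m :: nat and A :: "nat set"
  fixes x :: "nat \<Rightarrow> nat \<Rightarrow> complex"
  assumes "finite A"
  shows "(\<Sum>\<sigma>\<in>{\<sigma>. \<sigma> permutes {..<m}}. of_int (sign \<sigma>) * (\<Prod>C\<in>perm_cycles m \<sigma>. \<Sum>n\<in>A. \<Prod>i\<in>C. x n i))
       = (\<Sum>f\<in>{f\<in>{..<m} \<rightarrow>\<^sub>E A. inj_on f {..<m}}. \<Prod>i<m. x (f i) i)"
proof -
  let ?P = "{\<sigma>. \<sigma> permutes {..<m}}"
  let ?F = "{..<m} \<rightarrow>\<^sub>E A"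
  have fP: "finite ?P" by (simp add: finite_permutations)
  have fF: "finite ?F" using assms by (simp add: finite_PiE)
  have "(\<Sum>\<sigma>\<in>?P. of_int (sign \<sigma>) * (\<Prod>C\<in>perm_cycles m \<sigma>. \<Sum>n\<in>A. \<Prod>i\<in>C. x n i))
      = (\<Sum>\<sigma>\<in>?P. \<Sum>f\<in>?F. if (\<forall>k<m. f (\<sigma> k) = f k) then of_int (sign \<sigma>) * (\<Prod>i<m. x (f i) i) else 0)"
  proof (rule sum.cong[OF refl])
    fix \<sigma> assume "\<sigma> \<in> ?P"
    then show "of_int (sign \<sigma>) * (\<Prod>C\<in>perm_cycles m \<sigma>. \<Sum>n\<in>A. \<Prod>i\<in>C. x n i) =
      (\<Sum>f\<in>?F. if (\<forall>k<m. f (\<sigma> k) = f k) then of_int (sign \<sigma>) * (\<Prod>i<m. x (f i) i) else 0)"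
      using cycles_prod[of \<sigma> m A x] assms fF
      by (simp add: sum.inter_filter sum_distrib_left if_distrib cong: if_cong)
  qed
  also have "\<dots> = (\<Sum>f\<in>?F. \<Sum>\<sigma>\<in>?P. if (\<forall>k<m. f (\<sigma> k) = f k) then of_int (sign \<sigma>) * (\<Prod>i<m. x (f i) i) else 0)"
    by (rule sum.swap)
  also have "\<dots> = (\<Sum>f\<in>?F. (\<Prod>i<m. x (f i) i) * (\<Sum>\<sigma>\<in>{\<sigma>. \<sigma> permutes {..<m} \<and> (\<forall>k<m. f (\<sigma> k) = f k)}. of_int (sign \<sigma>)))"
  proof (rule sum.cong[OF refl])
    fix f :: "nat \<Rightarrow> nat"
    have e: "{\<sigma>. \<sigma> permutes {..<m} \<and> (\<forall>k<m. f (\<sigma> k) = f k)} = {\<sigma>\<in>?P. (\<forall>k<m. f (\<sigma> k) = f k)}" by simp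
    show "(\<Sum>\<sigma>\<in>?P. if (\<forall>k<m. f (\<sigma> k) = f k) then of_int (sign \<sigma>) * (\<Prod>i<m. x (f i) i) else 0) =
      (\<Prod>i<m. x (f i) i) * (\<Sum>\<sigma>\<in>{\<sigma>. \<sigma> permutes {..<m} \<and> (\<forall>k<m. f (\<sigma> k) = f k)}. of_int (sign \<sigma>))"
    proof -
      have "(\<Sum>\<sigma>\<in>?P. if (\<forall>k<m. f (\<sigma> k) = f k) then of_int (sign \<sigma>) * (\<Prod>i<m. x (f i) i) else 0)
          = (\<Sum>\<sigma>\<in>{\<sigma>\<in>?P. (\<forall>k<m. f (\<sigma> k) = f k)}. of_int (sign \<sigma>) * (\<Prod>i<m. x (f i) i))"
        by (rule sum.inter_filter[OF fP, symmetric])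
      also have "\<dots> = (\<Prod>i<m. x (f i) i) * (\<Sum>\<sigma>\<in>{\<sigma>\<in>?P. (\<forall>k<m. f (\<sigma> k) = f k)}. of_int (sign \<sigma>))"
        by (simp add: sum_distrib_left mult.commute)
      finally show ?thesis unfolding e .
    qed
  qed
  also have "\<dots> = (\<Sum>f\<in>?F. if inj_on f {..<m} then (\<Prod>i<m. x (f i) i) else 0)"
    by (rule sum.cong[OF refl]) (auto simp: sign_sum sign_sum_inj)
  also have "\<dots> = (\<Sum>f\<in>{f\<in>?F. inj_on f {..<m}}. \<Prod>i<m. x (f i) i)"
    using fF by (simp add: sum.inter_filter)
  finally show ?thesis .
qed



definition Wt :: "(nat \<Rightarrow> nat \<Rightarrow> complex) \<Rightarrow> nat set \<Rightarrow> (nat \<Rightarrow> nat) \<Rightarrow> complex" where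
  "Wt c A g = (\<Prod>n\<in>{n\<in>A. g n \<noteq> 0}. c n (g n))"
definition Lm :: "nat set \<Rightarrow> (nat \<Rightarrow> nat) \<Rightarrow> nat multiset" where
  "Lm A g = image_mset g (mset_set {n\<in>A. g n \<noteq> 0})"
definition Gs :: "nat set \<Rightarrow> nat multiset \<Rightarrow> (nat \<Rightarrow> nat) set" where
  "Gs A L = {g \<in> A \<rightarrow>\<^sub>E insert 0 (set_mset L). Lm A g = L}"
definition Ds :: "nat set \<Rightarrow> nat \<Rightarrow> nat list set" where
  "Ds A m = {fs. distinct fs \<and> set fs \<subseteq> A \<and> length fs = m}"
definition Is :: "(nat \<Rightarrow> nat \<Rightarrow> complex) \<Rightarrow> nat set \<Rightarrow> nat list \<Rightarrow> complex" where
  "Is c A ws = (\<Sum>fs\<in>Ds A (length ws). \<Prod>i<length ws. c (fs!i) (ws!i))"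

lemma Gs_alt:
  assumes "finite A"
  shows "g \<in> Gs A L \<longleftrightarrow> g \<in> extensional A \<and> Lm A g = L"
proof
  assume "g \<in> extensional A \<and> Lm A g = L"
  moreover have "n \<in> A \<Longrightarrow> g n \<noteq> 0 \<Longrightarrow> g n \<in># Lm A g" for n
    using assms unfolding Lm_def by auto
  ultimately show "g \<in> Gs A L" unfolding Gs_def PiE_def by auto
qed (auto simp: Gs_def PiE_def)

lemma finite_Gs: "finite A \<Longrightarrow> finite (Gs A L)"
  unfolding Gs_def by (rule finite_subset[of _ "A \<rightarrow>\<^sub>E insert 0 (set_mset L)"]) (auto intro: finite_PiE)

lemma finite_Ds: "finite A \<Longrightarrow> finite (Ds A m)"
  unfolding Ds_def by (rule finite_subset[of _ "{xs. set xs \<subseteq> A \<and> length xs = m}"])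
    (auto intro: finite_lists_length_eq)

lemma Lm_upd:
  assumes "finite A" "n0 \<in> A" "j \<noteq> 0"
  shows "Lm A (g(n0:=j)) = add_mset j (Lm (A-{n0}) g)"
proof -
  have e: "{n\<in>A. (g(n0:=j)) n \<noteq> 0} = insert n0 {n\<in>A-{n0}. g n \<noteq> 0}" using assms by auto
  have "Lm A (g(n0:=j)) = image_mset (g(n0:=j)) (add_mset n0 (mset_set {n\<in>A-{n0}. g n \<noteq> 0}))"
    unfolding Lm_def e using assms by (simp add: mset_set.insert)
  also have "\<dots> = add_mset j (image_mset (g(n0:=j)) (mset_set {n\<in>A-{n0}. g n \<noteq> 0}))" by simp
  also have "image_mset (g(n0:=j)) (mset_set {n\<in>A-{n0}. g n \<noteq> 0}) = Lm (A-{n0}) g"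
    unfolding Lm_def using assms by (intro image_mset_cong) auto
  finally show ?thesis .
qed

lemma Wt_upd:
  assumes "finite A" "n0 \<in> A" "j \<noteq> 0"
  shows "Wt c A (g(n0:=j)) = c n0 j * Wt c (A-{n0}) g"
proof -
  have e: "{n\<in>A. (g(n0:=j)) n \<noteq> 0} = insert n0 {n\<in>A-{n0}. g n \<noteq> 0}" using assms by auto
  have "Wt c A (g(n0:=j)) = c n0 j * (\<Prod>n\<in>{n\<in>A-{n0}. g n \<noteq> 0}. c n ((g(n0:=j)) n))"
    unfolding Wt_def e using assms by (simp add: prod.insert)
  also have "(\<Prod>n\<in>{n\<in>A-{n0}. g n \<noteq> 0}. c n ((g(n0:=j)) n)) = Wt c (A-{n0}) g"
    unfolding Wt_def by (intro prod.cong) auto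
  finally show ?thesis .
qed

lemma count_Lm:
  assumes "finite A" "j \<noteq> 0"
  shows "count (Lm A g) j = card {n\<in>A. g n = j}"
proof -
  have "count (Lm A g) j = (\<Sum>y\<in>g -` {j} \<inter> {n\<in>A. g n \<noteq> 0}. 1)"
    unfolding Lm_def count_image_mset using assms by (intro sum.cong) auto
  also have "g -` {j} \<inter> {n\<in>A. g n \<noteq> 0} = {n\<in>A. g n = j}" using assms by auto
  finally show ?thesis by simp
qed

lemma C_stb_add:
  "C_stb (add_mset j L) = (count L j + 1) * C_stb L"
proof (cases "j \<in># L")
  case True
  have "C_stb (add_mset j L) = fact (count L j + 1) * (\<Prod>x\<in>set_mset L - {j}. fact (count (add_mset j L) x))"
    unfolding C_stb_def using True by (simp add: prod.remove insert_absorb)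
  also have "(\<Prod>x\<in>set_mset L - {j}. fact (count (add_mset j L) x)) = (\<Prod>x\<in>set_mset L - {j}. fact (count L x))"
    by (intro prod.cong) auto
  also have "C_stb L = fact (count L j) * (\<Prod>x\<in>set_mset L - {j}. fact (count L x))"
    unfolding C_stb_def using True by (simp add: prod.remove)
  ultimately show ?thesis by (simp add: algebra_simps)
next
  case False
  have c0: "count L j = 0" using False by (simp add: not_in_iff)
  have "C_stb (add_mset j L) = fact 1 * (\<Prod>x\<in>set_mset L. fact (count (add_mset j L) x))"
    unfolding C_stb_def using False c0 by (simp add: prod.insert)
  also have "(\<Prod>x\<in>set_mset L. fact (count (add_mset j L) x)) = C_stb L"
    unfolding C_stb_def using False by (intro prod.cong) auto
  finally show ?thesis using c0 by simp
qed

lemma Ds_Suc: "Ds A (Suc m) = (\<lambda>(n0,fs). n0#fs) ` (SIGMA n0:A. Ds (A-{n0}) m)"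
proof (intro equalityI subsetI)
  fix fs assume "fs \<in> Ds A (Suc m)"
  then obtain a t where "fs = a#t" "distinct (a#t)" "set (a#t) \<subseteq> A" "length t = m"
    unfolding Ds_def by (auto simp: length_Suc_conv)
  then show "fs \<in> (\<lambda>(n0,fs). n0#fs) ` (SIGMA n0:A. Ds (A-{n0}) m)"
    unfolding Ds_def by (auto intro!: image_eqI[where x="(a,t)"])
qed (auto simp: Ds_def)

lemma Is_Cons:
  assumes "finite A"
  shows "Is c A (j#ws) = (\<Sum>n0\<in>A. c n0 j * Is c (A-{n0}) ws)"
proof -
  have inj: "inj_on (\<lambda>(n0,fs). n0#fs) (SIGMA n0:A. Ds (A-{n0}) (length ws))"
    by (auto simp: inj_on_def)
  have "Is c A (j#ws) = (\<Sum>p\<in>(SIGMA n0:A. Ds (A-{n0}) (length ws)). \<Prod>i<Suc (length ws). c (((\<lambda>(n0,fs). n0#fs) p)!i) ((j#ws)!i))"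
    unfolding Is_def length_Cons Ds_Suc by (simp only: sum.reindex[OF inj] comp_def)
  also have "\<dots> = (\<Sum>(n0,fs)\<in>(SIGMA n0:A. Ds (A-{n0}) (length ws)). \<Prod>i<Suc (length ws). c ((n0#fs)!i) ((j#ws)!i))"
    by (rule sum.cong) auto
  also have "\<dots> = (\<Sum>n0\<in>A. \<Sum>fs\<in>Ds (A-{n0}) (length ws). \<Prod>i<Suc (length ws). c ((n0#fs)!i) ((j#ws)!i))"
    using assms by (subst sum.Sigma) (auto simp: finite_Ds)
  also have "\<dots> = (\<Sum>n0\<in>A. c n0 j * Is c (A-{n0}) ws)"
    unfolding Is_def by (simp del: prod.lessThan_Suc add: prod.lessThan_Suc_shift sum_distrib_left)
  finally show ?thesis .
qed


lemma key_fixed: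
  assumes "finite A" "j \<noteq> 0" "n0 \<in> A"
  shows "c n0 j * (\<Sum>g\<in>Gs (A-{n0}) L. Wt c (A-{n0}) g) = (\<Sum>g'\<in>{g'\<in>Gs A (add_mset j L). g' n0 = j}. Wt c A g')"
proof -
  have fA': "finite (A-{n0})" using assms by simp
  have bij: "bij_betw (\<lambda>g. g(n0:=j)) (Gs (A-{n0}) L) {g'\<in>Gs A (add_mset j L). g' n0 = j}"
  proof (rule bij_betw_byWitness[where f'="\<lambda>g'. g'(n0:=undefined)"])
    show "\<forall>g\<in>Gs (A-{n0}) L. (g(n0:=j))(n0:=undefined) = g"
      using Gs_alt[OF fA'] by (auto simp: extensional_def)
    show "\<forall>g'\<in>{g'\<in>Gs A (add_mset j L). g' n0 = j}. (g'(n0:=undefined))(n0:=j) = g'"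
      by auto
    show "(\<lambda>g. g(n0:=j)) ` Gs (A-{n0}) L \<subseteq> {g'\<in>Gs A (add_mset j L). g' n0 = j}"
    proof
      fix g' assume "g' \<in> (\<lambda>g. g(n0:=j)) ` Gs (A-{n0}) L"
      then obtain g where g: "g \<in> Gs (A-{n0}) L" "g' = g(n0:=j)" by auto
      then have "g \<in> extensional (A-{n0})" "Lm (A-{n0}) g = L" using Gs_alt[OF fA'] by auto
      then have "g' \<in> extensional A" "Lm A g' = add_mset j L"
        using g(2) Lm_upd[OF assms(1,3,2)] assms by (auto simp: extensional_def)
      then show "g' \<in> {g'\<in>Gs A (add_mset j L). g' n0 = j}" using Gs_alt[OF assms(1)] g(2) by auto
    qed
    show "(\<lambda>g'. g'(n0:=undefined)) ` {g'\<in>Gs A (add_mset j L). g' n0 = j} \<subseteq> Gs (A-{n0}) L"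
    proof
      fix g assume "g \<in> (\<lambda>g'. g'(n0:=undefined)) ` {g'\<in>Gs A (add_mset j L). g' n0 = j}"
      then obtain g' where g': "g' \<in> Gs A (add_mset j L)" "g' n0 = j" "g = g'(n0:=undefined)" by auto
      then have e: "g' \<in> extensional A" "Lm A g' = add_mset j L" using Gs_alt[OF assms(1)] by auto
      have "g(n0:=j) = g'" using g' by auto
      then have "Lm A g' = add_mset j (Lm (A-{n0}) g)" using Lm_upd[OF assms(1,3,2), of g] by simp
      then have "Lm (A-{n0}) g = L" using e by simp
      moreover have "g \<in> extensional (A-{n0})" using e g' by (auto simp: extensional_def)
      ultimately show "g \<in> Gs (A-{n0}) L" using Gs_alt[OF fA'] by auto
    qed
  qed
  have "c n0 j * (\<Sum>g\<in>Gs (A-{n0}) L. Wt c (A-{n0}) g) = (\<Sum>g\<in>Gs (A-{n0}) L. Wt c A (g(n0:=j)))"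
    by (simp add: sum_distrib_left Wt_upd[OF assms(1,3,2)])
  also have "\<dots> = (\<Sum>g'\<in>{g'\<in>Gs A (add_mset j L). g' n0 = j}. Wt c A g')"
    by (rule sum.reindex_bij_betw[OF bij])
  finally show ?thesis .
qed

lemma key:
  assumes "finite A" "j \<noteq> 0"
  shows "(\<Sum>n0\<in>A. c n0 j * (\<Sum>g\<in>Gs (A-{n0}) L. Wt c (A-{n0}) g))
       = of_nat (count L j + 1) * (\<Sum>g\<in>Gs A (add_mset j L). Wt c A g)"
proof -
  let ?G = "Gs A (add_mset j L)"
  have fG: "finite ?G" using finite_Gs assms by blast
  have "(\<Sum>n0\<in>A. c n0 j * (\<Sum>g\<in>Gs (A-{n0}) L. Wt c (A-{n0}) g))
      = (\<Sum>n0\<in>A. \<Sum>g'\<in>?G. if g' n0 = j then Wt c A g' else 0)"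
    using key_fixed[OF assms] fG by (simp add: sum.inter_filter)
  also have "\<dots> = (\<Sum>g'\<in>?G. \<Sum>n0\<in>A. if g' n0 = j then Wt c A g' else 0)"
    by (rule sum.swap)
  also have "\<dots> = (\<Sum>g'\<in>?G. of_nat (count L j + 1) * Wt c A g')"
  proof (rule sum.cong[OF refl])
    fix g' assume g': "g' \<in> ?G"
    have "(\<Sum>n0\<in>A. if g' n0 = j then Wt c A g' else 0) = (\<Sum>n0\<in>{n0\<in>A. g' n0 = j}. Wt c A g')"
      by (rule sum.inter_filter[OF assms(1), symmetric])
    also have "\<dots> = of_nat (card {n0\<in>A. g' n0 = j}) * Wt c A g'" by (rule sum_constant)
    also have "card {n0\<in>A. g' n0 = j} = count (Lm A g') j" using count_Lm[OF assms] by simp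
    also have "Lm A g' = add_mset j L" using g' Gs_alt[OF assms(1)] by auto
    finally show "(\<Sum>n0\<in>A. if g' n0 = j then Wt c A g' else 0) = of_nat (count L j + 1) * Wt c A g'" by simp
  qed
  also have "\<dots> = of_nat (count L j + 1) * (\<Sum>g\<in>?G. Wt c A g)" by (simp add: sum_distrib_left)
  finally show ?thesis .
qed

lemma Gs_empty:
  assumes "finite A"
  shows "Gs A {#} = {(\<lambda>n. if n \<in> A then (0::nat) else undefined)}"
proof (intro equalityI subsetI)
  fix g assume g: "g \<in> Gs A {#}"
  then have "g \<in> A \<rightarrow>\<^sub>E {0}" unfolding Gs_def by auto
  then show "g \<in> {(\<lambda>n. if n \<in> A then (0::nat) else undefined)}" by (auto simp: PiE_def extensional_def)
next
  fix g assume "g \<in> {(\<lambda>n. if n \<in> A then (0::nat) else undefined)}"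
  then show "g \<in> Gs A {#}" using assms unfolding Gs_def Lm_def by auto
qed

lemma Is_Gs:
  assumes "finite A" "\<forall>x\<in>set ws. 0 < x"
  shows "Is c A ws = of_nat (C_stb (mset ws)) * (\<Sum>g\<in>Gs A (mset ws). Wt c A g)"
  using assms
proof (induction ws arbitrary: A)
  case Nil
  have "Ds A 0 = {[]}" by (auto simp: Ds_def)
  then have "Is c A [] = 1" by (simp add: Is_def)
  moreover have "C_stb {#} = 1" by (simp add: C_stb_def)
  moreover have "Wt c A (\<lambda>n. if n \<in> A then (0::nat) else undefined) = 1" by (simp add: Wt_def)
  ultimately show ?case using Gs_empty[OF Nil(1)] by simp
next
  case (Cons j ws)
  have j: "j \<noteq> 0" using Cons by auto
  have "Is c A (j#ws) = (\<Sum>n0\<in>A. c n0 j * Is c (A-{n0}) ws)" by (rule Is_Cons[OF Cons(2)])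
  also have "\<dots> = (\<Sum>n0\<in>A. of_nat (C_stb (mset ws)) * (c n0 j * (\<Sum>g\<in>Gs (A-{n0}) (mset ws). Wt c (A-{n0}) g)))"
    using Cons by (simp add: mult.left_commute)
  also have "\<dots> = of_nat (C_stb (mset ws)) * (\<Sum>n0\<in>A. c n0 j * (\<Sum>g\<in>Gs (A-{n0}) (mset ws). Wt c (A-{n0}) g))"
    by (simp add: sum_distrib_left)
  also have "\<dots> = of_nat (C_stb (mset ws)) * of_nat (count (mset ws) j + 1) * (\<Sum>g\<in>Gs A (add_mset j (mset ws)). Wt c A g)"
    using key[OF Cons(2) j] by simp
  also have "\<dots> = of_nat (C_stb (mset (j#ws))) * (\<Sum>g\<in>Gs A (mset (j#ws)). Wt c A g)"
    by (simp add: C_stb_add algebra_simps)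
  finally show ?case .
qed



lemma fun_to_list:
  fixes x :: "nat \<Rightarrow> nat \<Rightarrow> complex" and A :: "nat set" and m :: nat
  shows "(\<Sum>f\<in>{f\<in>{..<m} \<rightarrow>\<^sub>E A. inj_on f {..<m}}. \<Prod>i<m. x (f i) i) = (\<Sum>fs\<in>Ds A m. \<Prod>i<m. x (fs!i) i)"
proof -
  let ?F = "{f\<in>{..<m} \<rightarrow>\<^sub>E A. inj_on f {..<m}}"
  have bij: "bij_betw (\<lambda>f. map f [0..<m]) ?F (Ds A m)"
  proof (rule bij_betw_byWitness[where f'="\<lambda>fs i. if i < m then fs!i else undefined"])
    show "\<forall>f\<in>?F. (\<lambda>i. if i < m then map f [0..<m] ! i else undefined) = f"
    proof
      fix f assume f: "f \<in> ?F"
      show "(\<lambda>i. if i < m then map f [0..<m] ! i else undefined) = f"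
      proof (rule ext)
        fix i show "(if i < m then map f [0..<m] ! i else undefined) = f i"
        proof (cases "i < m")
          case True then show ?thesis by simp
        next
          case False
          have "f \<in> {..<m} \<rightarrow>\<^sub>E A" using f by simp
          then have "f i = undefined" by (rule PiE_arb) (use False in simp)
          then show ?thesis using False by simp
        qed
      qed
    qed
    show "\<forall>fs\<in>Ds A m. map (\<lambda>i. if i < m then fs!i else undefined) [0..<m] = fs"
    proof
      fix fs assume "fs \<in> Ds A m"
      then have len: "length fs = m" unfolding Ds_def by simp
      show "map (\<lambda>i. if i < m then fs!i else undefined) [0..<m] = fs"
        by (rule nth_equalityI) (simp_all add: len)
    qed
    show "(\<lambda>f. map f [0..<m]) ` ?F \<subseteq> Ds A m"
    proof
      fix fs assume "fs \<in> (\<lambda>f. map f [0..<m]) ` ?F"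
      then obtain f where f: "f \<in> ?F" "fs = map f [0..<m]" by blast
      have e: "set [0..<m] = {..<m}" by (simp add: atLeast0LessThan)
      have "distinct fs" unfolding f(2) distinct_map e using f(1) by simp
      moreover have "set fs \<subseteq> A" unfolding f(2) set_map e using f(1) by auto
      moreover have "length fs = m" unfolding f(2) by simp
      ultimately show "fs \<in> Ds A m" unfolding Ds_def by simp
    qed
    show "(\<lambda>fs i. if i < m then fs!i else undefined) ` Ds A m \<subseteq> ?F"
    proof
      fix g assume "g \<in> (\<lambda>fs i. if i < m then fs!i else undefined) ` Ds A m"
      then obtain fs where fs: "fs \<in> Ds A m" "g = (\<lambda>i. if i < m then fs!i else undefined)" by blast
      have d: "distinct fs" and s: "set fs \<subseteq> A" and len: "length fs = m" using fs(1) unfolding Ds_def by auto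
      have "g \<in> {..<m} \<rightarrow>\<^sub>E A"
      proof (rule PiE_I)
        fix i assume "i \<in> {..<m}"
        then have "fs ! i \<in> set fs" using len by simp
        then show "g i \<in> A" using s fs(2) \<open>i \<in> {..<m}\<close> by auto
      next
        fix i assume "i \<notin> {..<m}"
        then show "g i = undefined" using fs(2) by simp
      qed
      moreover have "inj_on g {..<m}"
      proof -
        have "inj_on (nth fs) {..<m}" by (rule inj_on_nth[OF d]) (simp add: len)
        moreover have "\<And>i. i \<in> {..<m} \<Longrightarrow> g i = fs ! i" using fs(2) by simp
        ultimately show ?thesis using inj_on_cong by blast
      qed
      ultimately show "g \<in> ?F" by simp
    qed
  qed
  have "(\<Sum>f\<in>?F. \<Prod>i<m. x (f i) i) = (\<Sum>f\<in>?F. \<Prod>i<m. x (map f [0..<m] ! i) i)"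
    by (rule sum.cong[OF refl], rule prod.cong[OF refl]) simp
  also have "\<dots> = (\<Sum>fs\<in>Ds A m. \<Prod>i<m. x (fs!i) i)"
    by (rule sum.reindex_bij_betw[OF bij])
  finally show ?thesis .
qed

lemma size_le_sum: "(\<forall>x\<in>#L. 0 < (x::nat)) \<Longrightarrow> size L \<le> sum_mset L"
  by (induction L) auto

lemma finite_partitions: "finite (partitions_of k)"
proof (rule finite_subset)
  show "partitions_of k \<subseteq> mset ` {xs. set xs \<subseteq> {..k} \<and> length xs \<le> k}"
  proof
    fix L assume L: "L \<in> partitions_of k"
    have "\<forall>x\<in>#L. x \<le> k"
    proof
      fix x assume "x \<in># L"
      then have "sum_mset L = x + sum_mset (L - {#x#})" by (rule sum_mset.remove)
      then show "x \<le> k" using L unfolding partitions_of_def by simp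
    qed
    moreover have "size L \<le> k" using L size_le_sum unfolding partitions_of_def by blast
    moreover have "length (sorted_list_of_multiset L) = size L"
      by (metis mset_sorted_list_of_multiset size_mset)
    ultimately show "L \<in> mset ` {xs. set xs \<subseteq> {..k} \<and> length xs \<le> k}"
      by (intro image_eqI[where x="sorted_list_of_multiset L"]) auto
  qed
  show "finite (mset ` {xs. set xs \<subseteq> {..k} \<and> length xs \<le> k})"
    by (intro finite_imageI finite_lists_length_le) simp
qed


theorem mainTheorem4:
  fixes N \<alpha> :: nat and a :: "nat \<Rightarrow> complex" and aa :: "nat \<Rightarrow> nat \<Rightarrow> complex"
  assumes "\<And>n j. aa n j = (if 1 \<le> n \<and> n \<le> N \<and> 1 \<le> j \<and> j \<le> \<alpha> then a j else 0)"
  shows "(1 + (\<Sum>j=1..\<alpha>. a j)) ^ N =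
    1 + (\<Sum>k=1..\<alpha> * N. \<Sum>L\<in>partitions_of k.
           (1 / of_nat (C_stb L)) *
           (\<Sum>\<sigma>\<in>{\<sigma>. \<sigma> permutes {..<part_len L}}. of_int (sign \<sigma>) * bbA \<sigma> L aa))"
proof -
  define A where "A = {..<N}"
  define c where "c = (\<lambda>n j. aa (Suc n) j)"
  define G where "G = A \<rightarrow>\<^sub>E {0..\<alpha>}"
  define W where "W = Wt c A"
  have fA: "finite A" unfolding A_def by simp
  have fG: "finite G" unfolding G_def using fA by (simp add: finite_PiE)
  have cA: "card A = N" unfolding A_def by simp
  have Lm_mem: "g n \<in># Lm A g" if "n \<in> A" "g n \<noteq> 0" for g n
    using that fA unfolding Lm_def by auto
  have Lm_ex: "\<exists>n\<in>A. g n \<noteq> 0 \<and> g n = x" if "x \<in># Lm A g" for g x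
    using that fA unfolding Lm_def by auto
  have S5: "(\<Sum>g\<in>Gs A L. W g) = (\<Sum>g\<in>{g\<in>G. Lm A g = L}. W g)" if L: "L \<in> partitions_of k" for L k
  proof (cases "set_mset L \<subseteq> {1..\<alpha>}")
    case True
    have "Gs A L = {g\<in>G. Lm A g = L}"
    proof (intro equalityI subsetI)
      fix g assume g: "g \<in> Gs A L"
      then have "g \<in> A \<rightarrow>\<^sub>E insert 0 (set_mset L)" "Lm A g = L" unfolding Gs_def by auto
      moreover have "A \<rightarrow>\<^sub>E insert 0 (set_mset L) \<subseteq> G" unfolding G_def using True
        by (intro PiE_mono) auto
      ultimately show "g \<in> {g\<in>G. Lm A g = L}" by auto
    next
      fix g assume "g \<in> {g\<in>G. Lm A g = L}"
      then show "g \<in> Gs A L" using Gs_alt[OF fA] unfolding G_def by (auto simp: PiE_def)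
    qed
    then show ?thesis by simp
  next
    case False
    then obtain x where x: "x \<in># L" "x \<notin> {1..\<alpha>}" by blast
    have x0: "x > \<alpha>" using x L unfolding partitions_of_def by auto
    have emp: "{g\<in>G. Lm A g = L} = {}"
    proof (rule ccontr)
      assume "{g\<in>G. Lm A g = L} \<noteq> {}"
      then obtain g where g: "g \<in> G" "Lm A g = L" by auto
      then obtain n where n: "n \<in> A" "g n = x" using Lm_ex x by blast
      have "g n \<in> {0..\<alpha>}" using PiE_mem[OF g(1)[unfolded G_def] n(1)] .
      then show False using n x0 by simp
    qed
    have W0: "W g = 0" if g: "g \<in> Gs A L" for g
    proof -
      have "Lm A g = L" using g Gs_alt[OF fA] by auto
      then obtain n where n: "n \<in> A" "g n \<noteq> 0" "g n = x" using Lm_ex x by blast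
      have "c n (g n) = 0" unfolding c_def using assms n x0 by simp
      then show ?thesis unfolding W_def Wt_def using n fA by (intro prod_zero) auto
    qed
    have "(\<Sum>g\<in>Gs A L. W g) = 0" using W0 by (intro sum.neutral) blast
    then show ?thesis unfolding emp by simp
  qed
  have termeq: "(1 / of_nat (C_stb L)) * (\<Sum>\<sigma>\<in>{\<sigma>. \<sigma> permutes {..<part_len L}}. of_int (sign \<sigma>) * bbA \<sigma> L aa)
      = (\<Sum>g\<in>{g\<in>G. Lm A g = L}. W g)" if L: "L \<in> partitions_of k" for L k
  proof -
    define ks where "ks = sorted_list_of_multiset L"
    define m where "m = size L"
    have mks: "mset ks = L" unfolding ks_def by simp
    have len: "length ks = m" using mks size_mset[of ks] unfolding m_def by simp
    have pos: "\<forall>x\<in>set ks. 0 < x" using L unfolding partitions_of_def mks[symmetric] by simp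
    have bb: "bbA \<sigma> L aa = (\<Prod>C\<in>perm_cycles m \<sigma>. \<Sum>n\<in>A. \<Prod>i\<in>C. c n (ks!i))" if s: "\<sigma> permutes {..<m}" for \<sigma>
      unfolding bbA_def Let_def ks_def[symmetric] m_def[symmetric]
    proof (intro prod.cong refl)
      fix C assume "C \<in> perm_cycles m \<sigma>"
      then obtain i where i: "C = orbit \<sigma> i" unfolding perm_cycles_def by auto
      have fC: "finite C" using orbit_fin[OF s] i by simp
      have neC: "C \<noteq> {}" using orbit_nonempty i by simp
      show "(\<Sum>n. \<Prod>i\<in>C. aa (Suc n) (ks ! i)) = (\<Sum>n\<in>A. \<Prod>i\<in>C. c n (ks!i))"
      proof -
        have "(\<Sum>n. \<Prod>i\<in>C. aa (Suc n) (ks ! i)) = (\<Sum>n\<in>A. \<Prod>i\<in>C. aa (Suc n) (ks ! i))"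
        proof (rule suminf_finite[OF fA])
          fix n assume "n \<notin> A"
          then have "aa (Suc n) j = 0" for j using assms unfolding A_def by simp
          then show "(\<Prod>i\<in>C. aa (Suc n) (ks ! i)) = 0" using fC neC by (intro prod_zero) auto
        qed
        then show ?thesis unfolding c_def by simp
      qed
    qed
    have "(\<Sum>\<sigma>\<in>{\<sigma>. \<sigma> permutes {..<part_len L}}. of_int (sign \<sigma>) * bbA \<sigma> L aa)
        = (\<Sum>\<sigma>\<in>{\<sigma>. \<sigma> permutes {..<m}}. of_int (sign \<sigma>) * (\<Prod>C\<in>perm_cycles m \<sigma>. \<Sum>n\<in>A. \<Prod>i\<in>C. c n (ks!i)))"
      unfolding part_len_def m_def[symmetric] by (intro sum.cong refl) (simp add: bb)
    also have "\<dots> = (\<Sum>f\<in>{f\<in>{..<m} \<rightarrow>\<^sub>E A. inj_on f {..<m}}. \<Prod>i<m. c (f i) (ks!i))"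
      by (rule sign_cycles[OF fA])
    also have "\<dots> = (\<Sum>fs\<in>Ds A m. \<Prod>i<m. c (fs!i) (ks!i))"
      by (rule fun_to_list)
    also have "\<dots> = Is c A ks" unfolding Is_def len ..
    also have "\<dots> = of_nat (C_stb L) * (\<Sum>g\<in>Gs A L. Wt c A g)"
      using Is_Gs[OF fA pos] mks by simp
    finally have e: "(\<Sum>\<sigma>\<in>{\<sigma>. \<sigma> permutes {..<part_len L}}. of_int (sign \<sigma>) * bbA \<sigma> L aa)
       = of_nat (C_stb L) * (\<Sum>g\<in>Gs A L. W g)" unfolding W_def .
    have "C_stb L \<noteq> 0" unfolding C_stb_def by simp
    then have "(1 / of_nat (C_stb L)) * (\<Sum>\<sigma>\<in>{\<sigma>. \<sigma> permutes {..<part_len L}}. of_int (sign \<sigma>) * bbA \<sigma> L aa)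
       = (\<Sum>g\<in>Gs A L. W g)" unfolding e by simp
    then show ?thesis using S5[OF L] by simp
  qed
  define F where "F k = (\<Sum>L\<in>partitions_of k. \<Sum>g\<in>{g\<in>G. Lm A g = L}. W g)" for k
  have lhs1: "(1 + (\<Sum>j=1..\<alpha>. a j)) = (\<Sum>j\<in>{0..\<alpha>}. if j = 0 then 1 else a j)"
    by (simp add: sum.atLeast_Suc_atMost)
  have "(1 + (\<Sum>j=1..\<alpha>. a j)) ^ N = (\<Prod>n\<in>A. \<Sum>j\<in>{0..\<alpha>}. if j = 0 then 1 else a j)"
    unfolding lhs1 using cA by simp
  also have "\<dots> = (\<Sum>g\<in>G. \<Prod>n\<in>A. if g n = 0 then 1 else a (g n))"
    unfolding G_def using prod_sum_PiE[OF fA, of "\<lambda>_. {0..\<alpha>}" "\<lambda>n j. if j = 0 then 1 else a j"] by simp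
  also have "\<dots> = (\<Sum>g\<in>G. W g)"
  proof (intro sum.cong refl)
    fix g assume g: "g \<in> G"
    have "W g = (\<Prod>n\<in>A. if g n \<noteq> 0 then c n (g n) else 1)"
      unfolding W_def Wt_def by (rule prod.inter_filter[OF fA])
    also have "\<dots> = (\<Prod>n\<in>A. if g n = 0 then 1 else a (g n))"
      using g assms unfolding G_def c_def A_def by (intro prod.cong refl) auto
    finally show "(\<Prod>n\<in>A. if g n = 0 then 1 else a (g n)) = W g" by simp
  qed
  also have "\<dots> = (\<Sum>k\<in>{0..\<alpha>*N}. \<Sum>g\<in>{g\<in>G. sum_mset (Lm A g) = k}. W g)"
  proof (rule sum.group[symmetric, OF fG])
    show "(\<lambda>g. sum_mset (Lm A g)) ` G \<subseteq> {0..\<alpha>*N}"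
    proof
      fix y assume "y \<in> (\<lambda>g. sum_mset (Lm A g)) ` G"
      then obtain g where g: "g \<in> G" "y = sum_mset (Lm A g)" by auto
      have "y = sum g {n\<in>A. g n \<noteq> 0}" unfolding g(2) Lm_def by (simp add: sum_unfold_sum_mset)
      also have "\<dots> \<le> sum g A" using fA by (intro sum_mono2) auto
      also have "\<dots> \<le> of_nat (card A) * \<alpha>" using g(1) unfolding G_def by (intro sum_bounded_above) auto
      finally show "y \<in> {0..\<alpha>*N}" using cA by (simp add: mult.commute)
    qed
  qed simp
  also have "\<dots> = (\<Sum>k\<in>{0..\<alpha>*N}. F k)"
  proof (intro sum.cong refl)
    fix k
    have "(\<Sum>g\<in>{g\<in>G. sum_mset (Lm A g) = k}. W g)
        = (\<Sum>L\<in>partitions_of k. \<Sum>g\<in>{g\<in>{g\<in>G. sum_mset (Lm A g) = k}. Lm A g = L}. W g)"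
    proof (rule sum.group[symmetric])
      show "finite {g\<in>G. sum_mset (Lm A g) = k}" using fG by simp
      show "finite (partitions_of k)" by (rule finite_partitions)
      show "Lm A ` {g\<in>G. sum_mset (Lm A g) = k} \<subseteq> partitions_of k"
        using Lm_ex unfolding partitions_of_def by fastforce
    qed
    also have "\<dots> = F k" unfolding F_def
      by (intro sum.cong refl) (auto simp: partitions_of_def)
    finally show "(\<Sum>g\<in>{g\<in>G. sum_mset (Lm A g) = k}. W g) = F k" .
  qed
  also have "\<dots> = F 0 + (\<Sum>k=1..\<alpha>*N. F k)" by (simp add: sum.atLeast_Suc_atMost)
  also have "F 0 = 1"
  proof -
    have z: "L = {#}" if "\<forall>x\<in>#L. 0 < x" "\<forall>x\<in>#L. x = 0" for L :: "nat multiset"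
      using that by (cases L) auto
    have p0: "partitions_of 0 = {{#}}" unfolding partitions_of_def using z by auto
    have "F 0 = (\<Sum>g\<in>Gs A {#}. W g)" unfolding F_def p0 using S5[of "{#}" 0] p0 by simp
    also have "\<dots> = 1" unfolding Gs_empty[OF fA] W_def Wt_def by simp
    finally show ?thesis .
  qed
  also have "(\<Sum>k=1..\<alpha>*N. F k) = (\<Sum>k=1..\<alpha> * N. \<Sum>L\<in>partitions_of k.
           (1 / of_nat (C_stb L)) *
           (\<Sum>\<sigma>\<in>{\<sigma>. \<sigma> permutes {..<part_len L}}. of_int (sign \<sigma>) * bbA \<sigma> L aa))"
    unfolding F_def
  proof (intro sum.cong refl)
    fix k L assume "L \<in> partitions_of k"
    then show "(\<Sum>g\<in>{g\<in>G. Lm A g = L}. W g) = (1 / of_nat (C_stb L)) *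
           (\<Sum>\<sigma>\<in>{\<sigma>. \<sigma> permutes {..<part_len L}}. of_int (sign \<sigma>) * bbA \<sigma> L aa)"
      by (rule termeq[symmetric])
  qed
  finally show ?thesis .
qed

end
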